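(* Let $n\geq 2$ be an integer. Then $$\frac{\Delta(\Psi_n(x))}{\Delta(\Phi_n(x))}=\begin{cases}\dfrac{2^{\varphi(n)}}{p}&\text{if } n=p^\alpha \text{ for some prime } p \text{ and some positive integer } \alpha;\\[1ex] 2^{\varphi(n)}&\text{otherwise}.\end{cases}$$
   Context: The Fibonacci polynomials are defined by $F_1(x)=1$, $F_2(x)=x$, and $F_n(x)=xF_{n-1}(x)+F_{n-2}(x)$ for $n\geq 3$. For $n\geq 2$, the $n$-th fibotomic polynomial $\Psi_n(x)\in\mathbb{Z}[x]$ is the product of the monic irreducible factors of $F_n(x)$ which are not factors of $F_k(x)$ for any $k<n$; also $\Psi_1(x)=1$. For $n\ge2$, $\Psi_n$ is monic of degree $\varphi(n)$ (Euler's totient). $\Phi_n(x)$ is the $n$-th cyclotomic polynomial. $\Delta(f)$ denotes the discriminant of a monic polynomial $f$ with roots $r_1,\dots,r_d$, namely $\prod_{i<j}(r_i-r_j)^2$. *)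

theory Defs
  imports "HOL-Computational_Algebra.Computational_Algebra" "HOL-Number_Theory.Number_Theory"
begin

fun fib_poly :: "nat \<Rightarrow> int poly" where
  "fib_poly 0 = 0"
| "fib_poly (Suc 0) = 1"
| "fib_poly (Suc (Suc n)) = [:0, 1:] * fib_poly (Suc n) + fib_poly n"

definition fibotomic :: "nat \<Rightarrow> int poly" where
  "fibotomic n = (if n \<le> 1 then 1 else
     \<Prod>{q. lead_coeff q = 1 \<and> irreducible q \<and> q dvd fib_poly n \<and> (\<forall>k\<in>{1..<n}. \<not> q dvd fib_poly k)})"

definition cyclotomic :: "nat \<Rightarrow> complex poly" where
  "cyclotomic n = (\<Prod>k\<in>{k\<in>{1..n}. coprime k n}. [:- cis (2 * pi * real k / real n), 1:])"

text \<open>Discriminant of a monic complex polynomial: product over i<j of (r_i - r_j)^2,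
  where r_1..r_d are its roots listed with multiplicity (independent of the order).\<close>
definition disc :: "complex poly \<Rightarrow> complex" where
  "disc f = (let rs = (SOME xs. mset xs = proots f) in
     \<Prod>j<length rs. \<Prod>i<j. (rs ! i - rs ! j)^2)"

end

theory Submission
  imports Defs
begin

abbreviation ci :: "int poly \<Rightarrow> complex poly" where
  "ci p \<equiv> map_poly of_int p"

lemma ci_add: "ci (p + q) = ci p + ci q"
  by (rule poly_eqI) (simp add: coeff_map_poly)

lemma ci_mult: "ci (p * q) = ci p * ci q"
proof (induction p)
  case 0
  then show ?case by simp
next
  case (pCons a p)
  have "ci (pCons a p * q) = ci (Polynomial.smult a q + pCons 0 (p * q))" by simp
  also have "\<dots> = Polynomial.smult (of_int a) (ci q) + pCons 0 (ci p * ci q)"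
    by (simp add: ci_add map_poly_smult map_poly_pCons pCons.IH)
  also have "\<dots> = ci (pCons a p) * ci q"
    by (simp add: map_poly_pCons)
  finally show ?case .
qed

lemma ci_1 [simp]: "ci 1 = 1" by simp

lemma ci_prod_mset: "ci (prod_mset M) = (\<Prod>q\<in>#M. ci q)"
  by (induction M) (auto simp: ci_mult)

lemma ci_prod: "ci (\<Prod>q\<in>A. f q) = (\<Prod>q\<in>A. ci (f q))"
  by (induction A rule: infinite_finite_induct) (auto simp: ci_mult)

lemma ci_dvd: "p dvd q \<Longrightarrow> ci p dvd ci q"
  by (auto elim!: dvdE simp: ci_mult)

lemma ci_eq_0_iff [simp]: "ci p = 0 \<longleftrightarrow> p = 0"
  by (simp add: map_poly_eq_0_iff)

lemma ci_degree [simp]: "degree (ci p) = degree p"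
  by (cases "p = 0") (auto intro!: map_poly_degree_eq)

lemma ci_X [simp]: "ci [:0, 1:] = [:0, 1:]"
  by (simp add: map_poly_pCons)

section \<open>Fibonacci polynomials\<close>

lemma fib_poly_deg_lead:
  "degree (fib_poly (Suc m)) = m \<and> lead_coeff (fib_poly (Suc m)) = 1"
proof (induction m rule: less_induct)
  case (less m)
  show ?case
  proof (cases m)
    case 0 then show ?thesis by simp
  next
    case (Suc k)
    show ?thesis
    proof (cases k)
      case 0
      then show ?thesis using Suc by simp
    next
      case (Suc j)
      have ih1: "degree (fib_poly (Suc k)) = k" "lead_coeff (fib_poly (Suc k)) = 1"
        using less[of k] \<open>m = Suc k\<close> by auto
      have ih2: "degree (fib_poly (Suc j)) = j"
        using less \<open>m = Suc k\<close> Suc by auto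
      have e: "fib_poly (Suc m) = [:0,1:] * fib_poly (Suc k) + fib_poly (Suc j)"
        using \<open>m = Suc k\<close> Suc by simp
      have nz: "fib_poly (Suc k) \<noteq> 0" by (metis ih1(2) leading_coeff_0_iff zero_neq_one)
      have d1: "degree ([:0,1:] * fib_poly (Suc k)) = Suc k"
        using degree_mult_eq[OF _ nz, of "[:0,1:]"] ih1 by simp
      have l1: "lead_coeff ([:0,1:] * fib_poly (Suc k)) = 1"
        using ih1 nz by (simp add: lead_coeff_mult)
      have lt: "degree (fib_poly (Suc j)) < degree ([:0,1:] * fib_poly (Suc k))"
        using d1 ih2 Suc by simp
      have "degree (fib_poly (Suc m)) = Suc k"
        unfolding e using degree_add_eq_right[OF lt] d1 by (simp add: add.commute)
      moreover have "lead_coeff (fib_poly (Suc m)) = 1"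
        unfolding e using lead_coeff_add_le[OF lt] l1 by (simp add: add.commute)
      ultimately show ?thesis using \<open>m = Suc k\<close> by simp
    qed
  qed
qed

lemma fib_poly_nz: "m \<ge> 1 \<Longrightarrow> fib_poly m \<noteq> 0"
  using fib_poly_deg_lead[of "m - 1"] by (cases m) auto

lemma fib_poly_eval:
  "\<i> * poly (ci (fib_poly m)) (2 * \<i> * of_real (cos t)) * of_real (sin t)
     = \<i> ^ m * of_real (sin (real m * t))"
proof (induction m rule: fib_poly.induct)
  case 1 then show ?case by simp
next
  case 2 then show ?case by simp
next
  case (3 n)
  have rec: "ci (fib_poly (Suc (Suc n))) = [:0,1:] * ci (fib_poly (Suc n)) + ci (fib_poly n)"
    by (simp add: ci_add ci_mult map_poly_pCons)
  have s: "sin (real (Suc (Suc n)) * t) = 2 * cos t * sin (real (Suc n) * t) - sin (real n * t)"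
  proof -
    have g: "sin (a + t) = 2 * cos t * sin a - sin (a - t)" for a
      by (simp add: sin_add sin_diff algebra_simps)
    have a: "real (Suc (Suc n)) * t = real (Suc n) * t + t" by (simp add: algebra_simps)
    have b: "real n * t = real (Suc n) * t - t" by (simp add: algebra_simps)
    show ?thesis unfolding a b by (rule g)
  qed
  have "\<i> * poly (ci (fib_poly (Suc (Suc n)))) (2 * \<i> * of_real (cos t)) * of_real (sin t)
      = 2 * \<i> * of_real (cos t) * (\<i> * poly (ci (fib_poly (Suc n))) (2 * \<i> * of_real (cos t)) * of_real (sin t))
        + \<i> * poly (ci (fib_poly n)) (2 * \<i> * of_real (cos t)) * of_real (sin t)"
    by (subst rec) (simp add: algebra_simps)
  also have "\<dots> = 2 * \<i> * of_real (cos t) * (\<i> ^ Suc n * of_real (sin (real (Suc n) * t)))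
        + \<i> ^ n * of_real (sin (real n * t))"
    using 3 by simp
  also have "\<dots> = \<i> ^ Suc (Suc n) * of_real (sin (real (Suc (Suc n)) * t))"
  proof -
    have g: "2 * \<i> * c * (\<i> ^ Suc n * S1) + \<i> ^ n * S0 = \<i> ^ Suc (Suc n) * (2*c*S1 - S0)"
      for c S1 S0 :: complex by (simp add: algebra_simps)
    show ?thesis unfolding s of_real_diff of_real_mult using g[of "of_real (cos t)" "of_real (sin (real (Suc n) * t))" "of_real (sin (real n * t))"] by simp
  qed
  finally show ?case .
qed

section \<open>Roots of Fibonacci polynomials\<close>

lemma proots_eq_mset_set:
  fixes p :: "complex poly"
  assumes "p \<noteq> 0" "finite A" "\<And>x. x \<in> A \<Longrightarrow> poly p x = 0" "card A = degree p"
  shows "proots p = mset_set A"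
proof -
  have sub: "mset_set A \<subseteq># proots p"
  proof (rule mset_subset_eqI)
    fix x
    show "count (mset_set A) x \<le> count (proots p) x"
    proof (cases "x \<in> A")
      case True
      then have "Polynomial.order x p \<noteq> 0" using assms order_root[of p x] by auto
      then show ?thesis using True assms by (simp add: count_mset_set)
    next
      case False
      then show ?thesis using assms by (simp add: count_mset_set)
    qed
  qed
  have "size (proots p - mset_set A) = 0"
    using size_Diff_submset[OF sub] assms by (simp add: size_proots_complex)
  then have "proots p - mset_set A = {#}" by simp
  then show ?thesis using sub by (metis subset_mset.add_diff_inverse add.right_neutral)
qed

definition yv :: "nat \<Rightarrow> nat \<Rightarrow> complex" where
  "yv m j = 2 * \<i> * of_real (cos (real j * pi / real m))"

definition Yall :: "nat \<Rightarrow> complex set" where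
  "Yall m = yv m ` {1..<m}"

lemma yv_eq:
  assumes "j \<le> n" "l \<le> k" "0 < n" "0 < k" "yv n j = yv k l"
  shows "j * k = l * n"
proof -
  have c: "cos (real j * pi / real n) = cos (real l * pi / real k)"
    using assms(5) unfolding yv_def by simp
  have r1: "0 \<le> real j * pi / real n" "real j * pi / real n \<le> pi"
    using assms by (auto simp: field_simps)
  have r2: "0 \<le> real l * pi / real k" "real l * pi / real k \<le> pi"
    using assms by (auto simp: field_simps)
  have "real j * pi / real n = real l * pi / real k"
    using cos_inj_pi[OF r1 r2 c] .
  then have "real j * real k = real l * real n"
    using assms by (auto simp: field_simps)
  then show ?thesis by (metis of_nat_eq_iff of_nat_mult)
qed

lemma yv_root:
  assumes "0 < j" "j < m"
  shows "poly (ci (fib_poly m)) (yv m j) = 0"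
proof -
  define t where "t = real j * pi / real m"
  have "0 < t" "t < pi" using assms by (auto simp: t_def field_simps)
  then have s: "sin t \<noteq> 0" using sin_gt_zero by fastforce
  have "real m * t = real j * pi" using assms by (simp add: t_def)
  then have "sin (real m * t) = 0" by (simp add: sin_npi)
  then have "\<i> * poly (ci (fib_poly m)) (yv m j) * of_real (sin t) = 0"
    using fib_poly_eval[of m t] by (simp add: yv_def t_def)
  then show ?thesis using s by simp
qed

lemma card_Yall: "card (Yall m) = m - 1"
proof -
  have "inj_on (yv m) {1..<m}"
  proof (rule inj_onI)
    fix j l assume "j \<in> {1..<m}" "l \<in> {1..<m}" "yv m j = yv m l"
    then have "j * m = l * m" using yv_eq[of j m l m] by auto
    then show "j = l" using \<open>j \<in> {1..<m}\<close> by auto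
  qed
  then show ?thesis unfolding Yall_def by (simp add: card_image)
qed

lemma proots_fib:
  assumes "m \<ge> 1"
  shows "proots (ci (fib_poly m)) = mset_set (Yall m)"
proof (rule proots_eq_mset_set)
  show "ci (fib_poly m) \<noteq> 0" using fib_poly_nz[OF assms] by simp
  show "finite (Yall m)" by (simp add: Yall_def)
  show "poly (ci (fib_poly m)) x = 0" if "x \<in> Yall m" for x
    using that yv_root unfolding Yall_def by auto
  show "card (Yall m) = degree (ci (fib_poly m))"
    using fib_poly_deg_lead[of "m - 1"] assms card_Yall[of m] by simp
qed

lemma fib_roots_iff:
  assumes "m \<ge> 1"
  shows "poly (ci (fib_poly m)) x = 0 \<longleftrightarrow> x \<in> Yall m"
proof -
  have "set_mset (proots (ci (fib_poly m))) = {x. poly (ci (fib_poly m)) x = 0}"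
    using fib_poly_nz[OF assms] by simp
  then show ?thesis using proots_fib[OF assms] by (simp add: Yall_def)
qed

lemma fib_order_le1:
  assumes "m \<ge> 1"
  shows "Polynomial.order x (ci (fib_poly m)) \<le> 1"
proof -
  have "Polynomial.order x (ci (fib_poly m)) = count (proots (ci (fib_poly m))) x"
    using fib_poly_nz[OF assms] by simp
  also have "\<dots> \<le> 1" unfolding proots_fib[OF assms]
    by (cases "x \<in> Yall m") (auto simp: count_mset_set Yall_def)
  finally show ?thesis .
qed

section \<open>Divisibility of Fibonacci polynomials\<close>

lemma fib_add:
  "fib_poly (a + b + 1) = fib_poly (a + 1) * fib_poly (b + 1) + fib_poly a * fib_poly b"
proof (induction a rule: fib_poly.induct)
  case 1 then show ?case by simp
next
  case 2 then show ?case by simp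
next
  case (3 n)
  have e1: "fib_poly (Suc (Suc n) + b + 1) = [:0,1:] * fib_poly (Suc n + b + 1) + fib_poly (n + b + 1)"
    by (simp add: add.commute add.left_commute)
  have e2: "fib_poly (Suc (Suc n) + 1) = [:0,1:] * fib_poly (Suc n + 1) + fib_poly (n + 1)"
    by simp
  have e3: "fib_poly (Suc n + 1) = [:0,1:] * fib_poly (n + 1) + fib_poly n"
    by simp
  show ?case
    unfolding e1 "3.IH" e2 by (simp only: e3) (simp add: algebra_simps)
qed

lemma fib_dvd_mult:
  assumes "m \<ge> 1"
  shows "fib_poly m dvd fib_poly (k * m)"
proof (induction k)
  case 0 then show ?case by simp
next
  case (Suc k)
  have "Suc k * m = k * m + (m - 1) + 1" using assms by simp
  then have "fib_poly (Suc k * m) = fib_poly (k * m + 1) * fib_poly (m - 1 + 1) + fib_poly (k * m) * fib_poly (m - 1)"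
    using fib_add[of "k * m" "m - 1"] by (simp add: add.commute)
  also have "m - 1 + 1 = m" using assms by simp
  finally show ?case using Suc by simp
qed

lemma fib_dvd:
  assumes "m \<ge> 1" "m dvd n"
  shows "fib_poly m dvd fib_poly n"
proof -
  obtain k where "n = m * k" using assms by (auto elim: dvdE)
  then show ?thesis using fib_dvd_mult[OF assms(1), of k] by (simp add: mult.commute)
qed

section \<open>Roots of the fibotomic polynomial\<close>

definition Sq :: "nat \<Rightarrow> int poly set" where
  "Sq n = {q. lead_coeff q = 1 \<and> irreducible q \<and> q dvd fib_poly n \<and> (\<forall>k\<in>{1..<n}. \<not> q dvd fib_poly k)}"

lemma fibotomic_eq: "n \<ge> 2 \<Longrightarrow> fibotomic n = \<Prod>(Sq n)"
  by (simp add: fibotomic_def Sq_def)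

lemma normalize_monic: "lead_coeff (q :: int poly) = 1 \<Longrightarrow> normalize q = q"
  by (simp add: normalize_poly_def one_pCons[symmetric])

lemma Sq_sub:
  assumes "n \<ge> 1"
  shows "Sq n \<subseteq> set_mset (prime_factorization (fib_poly n))"
proof
  fix q assume q: "q \<in> Sq n"
  then have "prime q"
    unfolding prime_def Sq_def by (auto intro: irreducible_imp_prime_elem normalize_monic)
  then show "q \<in># prime_factorization (fib_poly n)"
    using q fib_poly_nz[OF assms] by (intro prime_factorsI) (auto simp: Sq_def)
qed

lemma finite_Sq: "n \<ge> 1 \<Longrightarrow> finite (Sq n)"
  using Sq_sub finite_subset by blast

lemma fib_lead:
  assumes "n \<ge> 1" shows "lead_coeff (fib_poly n) = 1"
proof -
  obtain k where k: "n = Suc k" using assms by (cases n) auto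
  show ?thesis unfolding k using fib_poly_deg_lead[of k] by blast
qed

lemma fib_pf:
  assumes "n \<ge> 1"
  shows "prod_mset (prime_factorization (fib_poly n)) = fib_poly n"
proof -
  have np: "normalize (prod_mset A) = prod_mset A" if "\<And>p. p \<in># A \<Longrightarrow> prime p" for A :: "int poly multiset"
    using that
  proof (induction A)
    case (add p A)
    hence "prime p" by simp
    hence "normalize p = p" by simp
    with add show ?case by (simp add: normalize_mult)
  qed simp_all
  have "prod_mset (prime_factorization (fib_poly n)) = normalize (prod_mset (prime_factorization (fib_poly n)))"
    by (rule np[symmetric]) (auto intro: in_prime_factors_imp_prime)
  also have "\<dots> = normalize (fib_poly n)"
    using fib_poly_nz[OF assms] by (rule prod_mset_prime_factorization_weak)
  also have "\<dots> = fib_poly n" using fib_lead[OF assms] by (rule normalize_monic)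
  finally show ?thesis .
qed

lemma Psi_dvd:
  assumes "n \<ge> 1"
  shows "\<Prod>(Sq n) dvd fib_poly n"
proof -
  define M where "M = prime_factorization (fib_poly n)"
  have sub: "mset_set (Sq n) \<subseteq># M"
  proof (rule mset_subset_eqI)
    fix x
    show "count (mset_set (Sq n)) x \<le> count M x"
      using Sq_sub[OF assms] finite_Sq[OF assms] unfolding M_def
      by (cases "x \<in> Sq n") (auto simp: count_mset_set)
  qed
  have "\<Prod>(Sq n) = prod_mset (mset_set (Sq n))"
    by (simp add: prod_unfold_prod_mset)
  also have "\<dots> dvd prod_mset M" by (rule prod_mset_subset_imp_dvd[OF sub])
  also have "prod_mset M = fib_poly n"
    unfolding M_def using fib_pf[OF assms] .
  finally show ?thesis .
qed

definition Yset :: "nat \<Rightarrow> complex set" where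
  "Yset n = yv n ` {j\<in>{1..<n}. coprime j n}"

lemma root_dvd: "p dvd q \<Longrightarrow> poly (ci p) y = 0 \<Longrightarrow> poly (ci q) y = 0"
  by (auto elim!: dvdE simp: ci_mult)

lemma Psi_roots:
  assumes n: "n \<ge> 2"
  shows "poly (ci (\<Prod>(Sq n))) y = 0 \<longleftrightarrow> y \<in> Yset n"
proof
  assume "poly (ci (\<Prod>(Sq n))) y = 0"
  then obtain q where q: "q \<in> Sq n" "poly (ci q) y = 0"
    using finite_Sq[of n] n by (auto simp: ci_prod poly_prod)
  have qdvd: "q dvd fib_poly n" and qirr: "irreducible q"
    and qnd: "\<And>k. k \<in> {1..<n} \<Longrightarrow> \<not> q dvd fib_poly k"
    using q unfolding Sq_def by auto
  have "poly (ci (fib_poly n)) y = 0" using root_dvd[OF qdvd q(2)] .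
  then have "y \<in> Yall n" using fib_roots_iff[of n] n by simp
  then obtain j where j: "j \<in> {1..<n}" "y = yv n j" unfolding Yall_def by auto
  have "coprime j n"
  proof (rule ccontr)
    assume nc: "\<not> coprime j n"
    define d where "d = gcd j n"
    have "d \<noteq> 1" using nc unfolding d_def by (metis coprime_iff_gcd_eq_1)
    moreover have "d \<noteq> 0" using n unfolding d_def by simp
    ultimately have d1: "d > 1" by simp
    define m where "m = n div d"
    define l where "l = j div d"
    have nm: "n = m * d" unfolding m_def d_def by simp
    have jl: "j = l * d" unfolding l_def d_def by simp
    have "l \<ge> 1" using j jl by (cases l) auto
    have "m > 0" using nm n by (cases m) auto
    then have "m < n" using nm d1 by simp
    have "l < m" using j nm jl d1 by (metis atLeastLessThan_iff mult_less_cancel2)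
    have "m \<ge> 1" using \<open>l \<ge> 1\<close> \<open>l < m\<close> by simp
    have "real j * pi / real n = real l * pi / real m"
      using nm jl d1 by (simp add: field_simps)
    then have "yv n j = yv m l" by (simp add: yv_def)
    then have ym: "poly (ci (fib_poly m)) y = 0"
      using yv_root[of l m] \<open>l \<ge> 1\<close> \<open>l < m\<close> j by simp
    have "m dvd n" using nm by simp
    then obtain H where H: "fib_poly n = fib_poly m * H"
      using fib_dvd[OF \<open>m \<ge> 1\<close>] by (auto elim: dvdE)
    have "prime_elem q" using qirr by (rule irreducible_imp_prime_elem)
    then have "q dvd fib_poly m \<or> q dvd H"
      using qdvd H prime_elem_dvd_mult_iff by metis
    moreover have "\<not> q dvd fib_poly m" using qnd[of m] \<open>m \<ge> 1\<close> \<open>m < n\<close> by simp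
    ultimately have "q dvd H" by blast
    then have yH: "poly (ci H) y = 0" using root_dvd q(2) by blast
    have nzn: "ci (fib_poly n) \<noteq> 0" using fib_poly_nz[of n] n by simp
    then have nzm: "ci (fib_poly m) \<noteq> 0" and nzH: "ci H \<noteq> 0" using H by (auto simp: ci_mult)
    have "Polynomial.order y (ci (fib_poly n)) = Polynomial.order y (ci (fib_poly m)) + Polynomial.order y (ci H)"
      using H nzn by (simp add: ci_mult order_mult)
    moreover have "Polynomial.order y (ci (fib_poly m)) \<noteq> 0"
      using ym nzm order_root by blast
    moreover have "Polynomial.order y (ci H) \<noteq> 0"
      using yH nzH order_root by blast
    ultimately have "Polynomial.order y (ci (fib_poly n)) \<ge> 2" by simp
    then show False using fib_order_le1[of n y] n by simp
  qed
  then show "y \<in> Yset n" using j unfolding Yset_def by auto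
next
  assume "y \<in> Yset n"
  then obtain j where j: "j \<in> {1..<n}" "coprime j n" "y = yv n j" unfolding Yset_def by auto
  have yr: "poly (ci (fib_poly n)) y = 0" using yv_root[of j n] j by simp
  define M where "M = prime_factorization (fib_poly n)"
  have nz: "fib_poly n \<noteq> 0" using fib_poly_nz[of n] n by simp
  have lead: "lead_coeff (fib_poly n) = 1" using fib_lead[of n] n by simp
  have "prod_mset M = fib_poly n"
    unfolding M_def using fib_pf[of n] n by simp
  then have "poly (ci (prod_mset M)) y = 0" using yr by simp
  then have "(\<Prod>q\<in>#M. poly (ci q) y) = 0" by (simp add: ci_prod_mset poly_prod_mset)
  then obtain q where qM: "q \<in># M" and qy: "poly (ci q) y = 0"
    by (auto simp: prod_mset_zero_iff)
  have pq: "prime q" using qM unfolding M_def by (rule in_prime_factors_imp_prime)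
  have qdvd: "q dvd fib_poly n" using qM unfolding M_def by (rule in_prime_factors_imp_dvd)
  have irr: "irreducible q" using pq by (simp add: prime_def prime_elem_imp_irreducible)
  have qnz: "q \<noteq> 0" using pq by auto
  have lq: "lead_coeff q = 1"
  proof -
    obtain r where r: "fib_poly n = q * r" using qdvd by (auto elim: dvdE)
    have "lead_coeff q * lead_coeff r = 1" using lead r by (simp add: lead_coeff_mult)
    moreover have "normalize q = q" using pq by (simp add: prime_def)
    then have "unit_factor q * q = q" by (metis unit_factor_mult_normalize)
    then have "unit_factor q = 1" using qnz by (metis mult_cancel_right2)
    then have "[:sgn (lead_coeff q):] = [:1:]" by (simp add: unit_factor_poly_def one_pCons[symmetric])
    then have "sgn (lead_coeff q) = 1" by simp
    then have "lead_coeff q > 0" by (simp add: sgn_1_pos)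
    ultimately show ?thesis using pos_zmult_eq_1_iff by blast
  qed
  have "\<not> q dvd fib_poly k" if k: "k \<in> {1..<n}" for k
  proof
    assume "q dvd fib_poly k"
    then have "poly (ci (fib_poly k)) y = 0" using root_dvd qy by blast
    then have "y \<in> Yall k" using fib_roots_iff[of k] k by simp
    then obtain l where l: "l \<in> {1..<k}" "y = yv k l" unfolding Yall_def by auto
    have "j * k = l * n" using yv_eq[of j n l k] j l k by auto
    then have "n dvd j * k" by (metis dvd_triv_right)
    then have "n dvd k" using j(2) by (simp add: coprime_dvd_mult_right_iff coprime_commute)
    then show False using k by (auto dest: dvd_imp_le)
  qed
  then have "q \<in> Sq n" using lq irr qdvd unfolding Sq_def by auto
  then show "poly (ci (\<Prod>(Sq n))) y = 0"
    using qy finite_Sq[of n] n by (auto simp: ci_prod poly_prod)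
qed

lemma proots_Psi:
  assumes n: "n \<ge> 2"
  shows "proots (ci (\<Prod>(Sq n))) = mset_set (Yset n)"
proof -
  obtain H where H: "fib_poly n = \<Prod>(Sq n) * H" using Psi_dvd[of n] n by (auto elim: dvdE)
  have nzn: "ci (fib_poly n) \<noteq> 0" using fib_poly_nz[of n] n by simp
  then have nzP: "ci (\<Prod>(Sq n)) \<noteq> 0" and nzH: "ci H \<noteq> 0" using H by (auto simp: ci_mult)
  have fin: "finite (Yset n)" by (simp add: Yset_def)
  show ?thesis
  proof (rule multiset_eqI)
    fix x
    have le: "Polynomial.order x (ci (\<Prod>(Sq n))) \<le> 1"
    proof -
      have "Polynomial.order x (ci (fib_poly n)) = Polynomial.order x (ci (\<Prod>(Sq n))) + Polynomial.order x (ci H)"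
        using H nzn by (simp add: ci_mult order_mult)
      then show ?thesis using fib_order_le1[of n x] n by simp
    qed
    show "count (proots (ci (\<Prod>(Sq n)))) x = count (mset_set (Yset n)) x"
    proof (cases "x \<in> Yset n")
      case True
      then have "Polynomial.order x (ci (\<Prod>(Sq n))) \<noteq> 0"
        using Psi_roots[OF n, of x] nzP order_root by blast
      then show ?thesis using le True fin nzP by (simp add: count_mset_set)
    next
      case False
      then have "Polynomial.order x (ci (\<Prod>(Sq n))) = 0"
        using Psi_roots[OF n, of x] nzP order_root by blast
      then show ?thesis using False fin nzP by (simp add: count_mset_set)
    qed
  qed
qed

section \<open>Discriminants via root sets\<close>

lemma offdiag_prod:
  fixes L :: nat and g :: "nat \<Rightarrow> nat \<Rightarrow> complex"
  shows "(\<Prod>j<L. \<Prod>i\<in>{..<L}-{j}. g j i) = (\<Prod>j<L. \<Prod>i<j. g i j * g j i)"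
proof (induction L)
  case 0 then show ?case by simp
next
  case (Suc L)
  have a: "(\<Prod>i\<in>{..<Suc L}-{j}. g j i) = g j L * (\<Prod>i\<in>{..<L}-{j}. g j i)" if "j < L" for j
  proof -
    have "{..<Suc L}-{j} = insert L ({..<L}-{j})" using that by auto
    then show ?thesis by simp
  qed
  have b: "{..<Suc L}-{L} = {..<L}" by auto
  have "(\<Prod>j<Suc L. \<Prod>i\<in>{..<Suc L}-{j}. g j i)
      = (\<Prod>j<L. g j L * (\<Prod>i\<in>{..<L}-{j}. g j i)) * (\<Prod>i<L. g L i)"
    by (simp add: a b)
  also have "\<dots> = (\<Prod>j<L. \<Prod>i\<in>{..<L}-{j}. g j i) * (\<Prod>i<L. g i L * g L i)"
    by (simp add: prod.distrib)
  also have "\<dots> = (\<Prod>j<Suc L. \<Prod>i<j. g i j * g j i)"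
    using Suc by simp
  finally show ?case .
qed

lemma prod_neg_c: "(\<Prod>i\<in>A. - f i :: complex) = (-1)^card A * (\<Prod>i\<in>A. f i)"
proof -
  have "(\<Prod>i\<in>A. - f i) = (\<Prod>i\<in>A. (-1) * f i)" by simp
  also have "\<dots> = (\<Prod>i\<in>A. -1) * (\<Prod>i\<in>A. f i)" by (rule prod.distrib)
  also have "(\<Prod>i\<in>A. -1 :: complex) = (-1)^card A" by simp
  finally show ?thesis .
qed

definition sg :: "nat \<Rightarrow> complex" where
  "sg L = (\<Prod>j<L. (-1) ^ j)"

definition DS :: "complex set \<Rightarrow> complex" where
  "DS S = (\<Prod>a\<in>S. \<Prod>b\<in>S-{a}. (a - b))"

lemma sg_sq: "sg L * sg L = 1"
proof -
  have "sg L * sg L = (\<Prod>j<L. ((-1) ^ j) * ((-1) ^ j) :: complex)"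
    unfolding sg_def by (rule prod.distrib[symmetric])
  also have "\<dots> = 1" by (intro prod.neutral) (simp flip: power_mult_distrib)
  finally show ?thesis .
qed

lemma disc_eq:
  assumes "proots f = mset_set S" "finite S"
  shows "disc f = sg (card S) * DS S"
proof -
  define rs where "rs = (SOME xs. mset xs = proots f)"
  have mrs: "mset rs = mset_set S"
    unfolding rs_def assms(1)[symmetric] by (rule someI_ex) (rule ex_mset)
  have srs: "set rs = S"
    using arg_cong[OF mrs, of set_mset] assms(2) by simp
  have lrs: "length rs = card S"
    using arg_cong[OF mrs, of size] by simp
  have drs: "distinct rs" using srs lrs by (intro card_distinct) simp
  define L where "L = length rs"
  have bij: "bij_betw ((!) rs) {..<L} S" using bij_betw_nth[OF drs] srs L_def by simp
  have inner: "(\<Prod>b\<in>S-{rs!j}. (rs!j - b)) = (\<Prod>i\<in>{..<L}-{j}. (rs!j - rs!i))" if "j < L" for j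
  proof -
    have inj: "inj_on ((!) rs) {..<L}" using bij by (simp add: bij_betw_def)
    have im: "(!) rs ` {..<L} = S" using bij by (simp add: bij_betw_def)
    have "(!) rs ` ({..<L}-{j}) = (!) rs ` {..<L} - (!) rs ` {j}"
      using that by (intro inj_on_image_set_diff[OF inj]) auto
    then have "bij_betw ((!) rs) ({..<L}-{j}) (S - {rs!j})"
      using inj im unfolding bij_betw_def by (auto intro: inj_on_subset)
    then show ?thesis by (rule prod.reindex_bij_betw[symmetric])
  qed
  have "DS S = (\<Prod>j<L. \<Prod>b\<in>S-{rs!j}. (rs!j - b))"
    unfolding DS_def by (rule prod.reindex_bij_betw[symmetric, OF bij])
  also have "\<dots> = (\<Prod>j<L. \<Prod>i\<in>{..<L}-{j}. (rs!j - rs!i))"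
    using inner by simp
  also have "\<dots> = (\<Prod>j<L. \<Prod>i<j. (rs!i - rs!j) * (rs!j - rs!i))"
    by (rule offdiag_prod)
  also have "\<dots> = (\<Prod>j<L. \<Prod>i<j. - ((rs!i - rs!j)^2))"
    by (intro prod.cong refl) (simp add: power2_eq_square algebra_simps)
  also have "\<dots> = (\<Prod>j<L. (-1)^j * (\<Prod>i<j. (rs!i - rs!j)^2))"
    by (intro prod.cong refl) (simp only: prod_neg_c card_lessThan)
  also have "\<dots> = sg L * (\<Prod>j<L. \<Prod>i<j. (rs!i - rs!j)^2)"
    unfolding sg_def by (rule prod.distrib)
  finally have "DS S = sg L * (\<Prod>j<L. \<Prod>i<j. (rs!i - rs!j)^2)" .
  then have "sg L * DS S = (\<Prod>j<L. \<Prod>i<j. (rs!i - rs!j)^2)"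
    using sg_sq[of L] by (simp add: mult.assoc[symmetric])
  moreover have "disc f = (\<Prod>j<L. \<Prod>i<j. (rs!i - rs!j)^2)"
    unfolding disc_def rs_def[symmetric] L_def Let_def by simp
  ultimately show ?thesis using lrs L_def by simp
qed

lemma DS_image:
  assumes "inj_on f U"
  shows "DS (f ` U) = (\<Prod>k\<in>U. \<Prod>l\<in>U-{k}. (f k - f l))"
proof -
  have "DS (f ` U) = (\<Prod>k\<in>U. \<Prod>b\<in>f ` U - {f k}. (f k - b))"
    unfolding DS_def by (rule prod.reindex[OF assms, unfolded comp_def])
  also have "\<dots> = (\<Prod>k\<in>U. \<Prod>l\<in>U-{k}. (f k - f l))"
  proof (intro prod.cong refl)
    fix k assume k: "k \<in> U"
    have "f ` U - {f k} = f ` (U - {k})" using assms k by (auto simp: inj_on_def)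
    moreover have "inj_on f (U - {k})" using assms by (rule inj_on_subset) auto
    ultimately show "(\<Prod>b\<in>f ` U - {f k}. (f k - b)) = (\<Prod>l\<in>U-{k}. (f k - f l))"
      by (simp add: prod.reindex)
  qed
  finally show ?thesis .
qed

definition U :: "nat \<Rightarrow> nat set" where
  "U n = {k\<in>{1..<n}. coprime k n}"

definition av :: "nat \<Rightarrow> nat \<Rightarrow> complex" where
  "av n k = cis (real k * pi / real n)"

definition zv :: "nat \<Rightarrow> nat \<Rightarrow> complex" where
  "zv n k = cis (2 * pi * real k / real n)"

lemma finite_U [simp]: "finite (U n)"
  by (simp add: U_def)

lemma U_eq:
  assumes "n \<ge> 2" shows "{k\<in>{1..n}. coprime k n} = U n"
proof -
  have "k < n" if "k \<le> n" "coprime k n" for k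
  proof (rule ccontr)
    assume "\<not> k < n"
    then have "k = n" using that by simp
    then have "coprime n n" using that by simp
    then have "n = 1" by simp
    then show False using assms by simp
  qed
  then show ?thesis by (auto simp: U_def)
qed

lemma cop_sigma: assumes "(k::nat) < n" "coprime k n" shows "coprime (n - k) n"
proof -
  have a: "gcd (n - (n - k)) (n - k) = gcd n (n - k)" using assms(1) by (intro gcd_diff1_nat) simp
  have b: "gcd (n - k) k = gcd n k" using assms(1) by (intro gcd_diff1_nat) simp
  have "gcd (n - k) n = gcd k n"
    using a b assms(1) by (simp add: gcd.commute)
  then show ?thesis using assms(2) by (metis coprime_iff_gcd_eq_1)
qed

lemma av_nz [simp]: "av n k \<noteq> 0"
  by (simp add: av_def)

lemma cis_plus_inverse: "cis t + inverse (cis t) = 2 * of_real (cos t)"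
proof -
  have "cis t + cis (-t) = 2 * complex_of_real (cos t)" by (simp add: complex_eq_iff)
  then show ?thesis by simp
qed

lemma yv_av: "yv n k = \<i> * (av n k + inverse (av n k))"
proof -
  define x where "x = real k * pi / real n"
  have "cis x + cis (-x) = 2 * complex_of_real (cos x)" by (simp add: complex_eq_iff)
  then have "av n k + inverse (av n k) = 2 * of_real (cos x)" by (simp add: av_def x_def)
  then show ?thesis by (simp add: yv_def x_def)
qed

lemma zv_av: "zv n k = (av n k)^2"
  by (simp add: zv_def av_def DeMoivre algebra_simps)

lemma U_sigma:
  assumes "k \<in> U n"
  shows "n - k \<in> U n" "n - (n - k) = k"
  using assms cop_sigma[of k n] unfolding U_def by auto

lemma av_sigma:
  assumes "k \<in> U n"
  shows "av n (n - k) = - inverse (av n k)"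
proof -
  have kn: "k < n" using assms by (simp add: U_def)
  have "real (n - k) * pi / real n = pi - real k * pi / real n"
    using kn by (simp add: of_nat_diff field_simps)
  moreover have "cis (pi - x) = cis pi * cis (- x)" for x
    by (simp add: complex_eq_iff cos_diff sin_diff)
  ultimately have "av n (n - k) = cis pi * cis (- (real k * pi / real n))"
    unfolding av_def by simp
  also have "\<dots> = - inverse (av n k)" by (simp add: av_def)
  finally show ?thesis .
qed

lemma prod_cis: "(\<Prod>k\<in>A. cis (f k)) = cis (\<Sum>k\<in>A. f k)"
  by (induction A rule: infinite_finite_induct) (auto simp: cis_mult)

lemma sum_U:
  assumes "n \<ge> 2"
  shows "2 * (\<Sum>k\<in>U n. real k) = real n * real (card (U n))"
proof -
  have "(\<Sum>k\<in>U n. real k) = (\<Sum>k\<in>U n. real (n - k))"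
    by (rule sum.reindex_bij_witness[where i = "\<lambda>k. n - k" and j = "\<lambda>k. n - k"])
       (auto simp: U_sigma)
  also have "\<dots> = (\<Sum>k\<in>U n. real n - real k)"
    by (intro sum.cong refl) (auto simp: U_def of_nat_diff)
  also have "\<dots> = real n * real (card (U n)) - (\<Sum>k\<in>U n. real k)"
    by (simp add: sum_subtractf)
  finally show ?thesis by simp
qed

lemma prod_av:
  assumes "n \<ge> 2"
  shows "(\<Prod>k\<in>U n. av n k) = \<i> ^ card (U n)"
proof -
  have "(\<Prod>k\<in>U n. av n k) = cis (\<Sum>k\<in>U n. real k * pi / real n)"
    unfolding av_def by (rule prod_cis)
  also have "(\<Sum>k\<in>U n. real k * pi / real n) = (\<Sum>k\<in>U n. real k) * pi / real n"
    by (simp add: sum_divide_distrib sum_distrib_right)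
  also have "\<dots> = real (card (U n)) * (pi / 2)"
    using sum_U[OF assms] assms by (simp add: field_simps)
  also have "cis \<dots> = cis (pi / 2) ^ card (U n)" by (simp only: DeMoivre)
  also have "cis (pi / 2) = \<i>" by (simp add: complex_eq_iff)
  finally show ?thesis .
qed

lemma main_product:
  assumes n: "n \<ge> 2"
  defines "m \<equiv> card (U n)"
  shows "(\<Prod>k\<in>U n. \<Prod>l\<in>U n-{k}. (yv n k - yv n l)) * (\<Prod>k\<in>U n. (1 - zv n k))
         = 2 ^ m * (\<Prod>k\<in>U n. \<Prod>l\<in>U n-{k}. (zv n k - zv n l))"
proof -
  define A where "A = U n"
  define a where "a = av n"
  define P where "P = (\<Prod>k\<in>A. a k)"
  define h where "h = (\<lambda>k l. 1 - inverse (a k * a l))"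
  define g where "g = (\<lambda>k l. (a k + a l) / a k)"
  have anz: "a k \<noteq> 0" for k by (simp add: a_def)
  have cardA: "card (A - {k}) = m - 1" if "k \<in> A" for k
    using that by (simp add: A_def m_def)
  have y: "yv n k - yv n l = \<i> * ((a k - a l) * h k l)" for k l
    using anz[of k] anz[of l] by (simp add: yv_av a_def[symmetric] h_def field_simps)
  have z: "zv n k - zv n l = (a k - a l) * (a k + a l)" for k l
    by (simp add: zv_av a_def[symmetric] power2_eq_square algebra_simps)
  define Dm where "Dm = (\<Prod>k\<in>A. \<Prod>l\<in>A-{k}. (a k - a l))"
  define Dp where "Dp = (\<Prod>k\<in>A. \<Prod>l\<in>A-{k}. (a k + a l))"
  define Hh where "Hh = (\<Prod>k\<in>A. \<Prod>l\<in>A-{k}. h k l)"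
  define I0 where "I0 = (\<i> ^ (m - 1)) ^ m"
  have Dy: "(\<Prod>k\<in>A. \<Prod>l\<in>A-{k}. (yv n k - yv n l)) = I0 * (Dm * Hh)"
  proof -
    have "(\<Prod>k\<in>A. \<Prod>l\<in>A-{k}. (yv n k - yv n l))
        = (\<Prod>k\<in>A. \<i> ^ (m - 1) * ((\<Prod>l\<in>A-{k}. (a k - a l)) * (\<Prod>l\<in>A-{k}. h k l)))"
      by (intro prod.cong refl) (simp add: y prod.distrib cardA del: card_Diff_insert)
    also have "\<dots> = I0 * (Dm * Hh)"
      by (simp add: prod.distrib I0_def Dm_def Hh_def A_def m_def)
    finally show ?thesis .
  qed
  have Dz: "(\<Prod>k\<in>A. \<Prod>l\<in>A-{k}. (zv n k - zv n l)) = Dm * Dp"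
    by (simp add: z prod.distrib Dm_def Dp_def)
  have step3: "(\<Prod>l\<in>A-{k}. h k l) * (a k ^ 2 - 1) * a k ^ (m - 1)
      = 2 * a k ^ 2 * (\<Prod>l\<in>A-{k}. (a k + a l))" if k: "k \<in> A" for k
  proof -
    have sk: "n - k \<in> A" "n - (n - k) = k" using U_sigma[of k n] k by (auto simp: A_def)
    have r1: "(\<Prod>l\<in>A-{n-k}. g k l) = (\<Prod>l\<in>A-{k}. h k l)"
    proof (rule prod.reindex_bij_witness[where i = "\<lambda>l. n - l" and j = "\<lambda>l. n - l"])
      fix l assume l: "l \<in> A - {n - k}"
      show "n - (n - l) = l" using U_sigma[of l n] l by (auto simp: A_def)
      show "n - l \<in> A - {k}" using U_sigma[of l n] l sk by (auto simp: A_def)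
      have an: "a (n - l) = - inverse (a l)" using av_sigma[of l n] l by (auto simp: A_def a_def)
      show "h k (n - l) = g k l"
        unfolding h_def g_def an using anz[of k] anz[of l] by (simp add: field_simps)
    next
      fix l assume l: "l \<in> A - {k}"
      show "n - (n - l) = l" using U_sigma[of l n] l by (auto simp: A_def)
      show "n - l \<in> A - {n - k}" using U_sigma[of l n] l sk
        by (auto simp: A_def)
    qed
    have r2: "(\<Prod>l\<in>A. g k l) = g k (n - k) * (\<Prod>l\<in>A-{n-k}. g k l)"
      using sk by (intro prod.remove) (auto simp: A_def)
    have r3: "(\<Prod>l\<in>A. g k l) = g k k * (\<Prod>l\<in>A-{k}. g k l)"
      using k by (intro prod.remove) (auto simp: A_def)
    have gkk: "g k k = 2" using anz[of k] by (simp add: g_def)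
    have gks: "g k (n - k) = (a k - inverse (a k)) / a k"
      using av_sigma[of k n] k by (simp add: g_def a_def A_def)
    have r4: "(\<Prod>l\<in>A-{k}. g k l) = (\<Prod>l\<in>A-{k}. (a k + a l)) / a k ^ (m - 1)"
      unfolding g_def using cardA[OF k] by (simp add: prod_dividef)
    have e: "(\<Prod>l\<in>A-{k}. h k l) * ((a k - inverse (a k)) / a k)
        = 2 * ((\<Prod>l\<in>A-{k}. (a k + a l)) / a k ^ (m - 1))"
      using r1[symmetric] r2 r3 gkk gks r4 by (simp add: mult.commute)
    show ?thesis using e anz[of k]
      by (simp add: field_simps power2_eq_square)
  qed
  have step4: "Hh * (\<Prod>k\<in>A. (a k ^ 2 - 1)) * P ^ (m - 1) = 2 ^ m * P ^ 2 * Dp"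
  proof -
    have "Hh * (\<Prod>k\<in>A. (a k ^ 2 - 1)) * P ^ (m - 1)
        = (\<Prod>k\<in>A. (\<Prod>l\<in>A-{k}. h k l) * (a k ^ 2 - 1) * a k ^ (m - 1))"
      by (simp add: Hh_def P_def prod.distrib prod_power_distrib)
    also have "\<dots> = (\<Prod>k\<in>A. 2 * a k ^ 2 * (\<Prod>l\<in>A-{k}. (a k + a l)))"
      using step3 by (intro prod.cong refl) auto
    also have "\<dots> = 2 ^ m * P ^ 2 * Dp"
      by (simp add: Dp_def P_def prod.distrib prod_power_distrib A_def m_def)
    finally show ?thesis .
  qed
  have Pv: "P = \<i> ^ m" unfolding P_def A_def a_def m_def using prod_av[OF n] .
  have P2: "P ^ 2 = (-1) ^ m" by (simp add: Pv power_mult[symmetric] power_mult_distrib mult.commute[of m] power_mult)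
  have PI: "P ^ (m - 1) = I0" by (simp add: Pv I0_def power_mult[symmetric] mult.commute)
  have I0nz: "I0 \<noteq> 0" by (simp add: I0_def)
  have Qz: "(\<Prod>k\<in>A. (a k ^ 2 - 1)) = (-1) ^ m * (\<Prod>k\<in>A. (1 - zv n k))"
  proof -
    have "(\<Prod>k\<in>A. (a k ^ 2 - 1)) = (\<Prod>k\<in>A. - (1 - zv n k))"
      by (intro prod.cong refl) (simp add: zv_av a_def)
    also have "\<dots> = (-1) ^ m * (\<Prod>k\<in>A. (1 - zv n k))"
      by (simp only: prod_neg_c) (simp add: A_def m_def)
    finally show ?thesis .
  qed
  have "I0 * ((-1) ^ m * ((\<Prod>k\<in>A. \<Prod>l\<in>A-{k}. (yv n k - yv n l)) * (\<Prod>k\<in>A. (1 - zv n k))))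
      = I0 * ((-1) ^ m * (2 ^ m * (\<Prod>k\<in>A. \<Prod>l\<in>A-{k}. (zv n k - zv n l))))"
  proof -
    have "I0 * ((-1) ^ m * ((\<Prod>k\<in>A. \<Prod>l\<in>A-{k}. (yv n k - yv n l)) * (\<Prod>k\<in>A. (1 - zv n k))))
        = I0 * Dm * (Hh * (\<Prod>k\<in>A. (a k ^ 2 - 1)) * P ^ (m - 1))"
      unfolding Dy Qz PI[symmetric] by (simp add: algebra_simps)
    also have "\<dots> = I0 * Dm * (2 ^ m * P ^ 2 * Dp)" unfolding step4 by (rule refl)
    also have "\<dots> = I0 * ((-1) ^ m * (2 ^ m * (\<Prod>k\<in>A. \<Prod>l\<in>A-{k}. (zv n k - zv n l))))"
      by (simp add: Dz P2 algebra_simps)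
    finally show ?thesis .
  qed
  then show ?thesis using I0nz by (simp add: A_def)
qed

section \<open>The value of the cyclotomic polynomial at 1\<close>

lemma cis_eq_1_dvd:
  fixes t :: int
  assumes "m > 0" "cis (2 * pi * real_of_int t / real m) = 1"
  shows "int m dvd t"
proof -
  have "cos (2 * pi * real_of_int t / real m) = 1"
    using arg_cong[OF assms(2), of Re] by simp
  then obtain k :: int where k: "2 * pi * real_of_int t / real m = real_of_int k * 2 * pi"
    by (auto simp: cos_one_2pi_int)
  then have "real_of_int t = real_of_int k * real m" using assms(1) by (simp add: field_simps)
  then have "t = k * int m" by (metis of_int_eq_iff of_int_mult of_int_of_nat_eq)
  then show ?thesis by simp
qed

lemma zv_inj:
  assumes "m > 0" "j < m" "l < m" "zv m j = zv m l"
  shows "j = l"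
proof -
  have "cis (2 * pi * real_of_int (int j - int l) / real m) = zv m j * inverse (zv m l)"
    by (simp add: zv_def cis_mult diff_divide_distrib algebra_simps)
  also have "\<dots> = 1" using assms(4) by (simp add: zv_def cis_mult)
  finally have dv: "int m dvd (int j - int l)" using cis_eq_1_dvd assms(1) by blast
  have "int j - int l = 0"
  proof (rule ccontr)
    assume ne: "int j - int l \<noteq> 0"
    from dvd_imp_le_int[OF ne dv] have "\<bar>int m\<bar> \<le> \<bar>int j - int l\<bar>" .
    then show False using assms(2,3) by simp
  qed
  then show ?thesis by simp
qed

lemma zv_root:
  assumes "0 < j" "j < m"
  shows "zv m j \<noteq> 1" "(zv m j) ^ m = 1"
proof -
  show "zv m j \<noteq> 1"
  proof
    assume "zv m j = 1"
    then have "int m dvd int j" using cis_eq_1_dvd[of m "int j"] assms by (simp add: zv_def)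
    then have "m dvd j" by (simp only: int_dvd_int_iff)
    then show False using assms by (auto dest: dvd_imp_le)
  qed
  have "(zv m j) ^ m = cis (2 * pi * real j)"
    using assms by (simp add: zv_def DeMoivre)
  also have "\<dots> = 1" by (simp add: complex_eq_iff)
  finally show "(zv m j) ^ m = 1" .
qed

lemma prod_one_minus_roots:
  assumes "m \<ge> 1"
  shows "(\<Prod>j\<in>{1..<m}. (1 - zv m j)) = of_nat m"
proof -
  define pm :: "complex poly" where "pm = (\<Sum>i<m. Polynomial.monom 1 i)"
  have cpm: "Polynomial.coeff pm i = (if i < m then 1 else 0)" for i
    by (simp add: pm_def coeff_sum)
  have dpm: "degree pm = m - 1"
  proof (rule le_antisym)
    show "degree pm \<le> m - 1" by (rule degree_le) (auto simp: cpm)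
    show "m - 1 \<le> degree pm" by (rule le_degree) (use assms in \<open>simp add: cpm\<close>)
  qed
  have lpm: "lead_coeff pm = 1" using dpm assms by (simp add: cpm)
  have nzpm: "pm \<noteq> 0" using lpm by auto
  have ppm: "poly pm z = (\<Sum>i<m. z ^ i)" for z
    by (simp add: pm_def poly_sum poly_monom)
  define A where "A = zv m ` {1..<m}"
  have inj: "inj_on (zv m) {1..<m}"
    by (rule inj_onI) (use zv_inj assms in auto)
  have prA: "proots pm = mset_set A"
  proof (rule proots_eq_mset_set[OF nzpm])
    show "finite A" by (simp add: A_def)
    show "card A = degree pm" using inj dpm by (simp add: A_def card_image)
    fix x assume "x \<in> A"
    then obtain j where j: "j \<in> {1..<m}" "x = zv m j" by (auto simp: A_def)
    then have "x \<noteq> 1" "x ^ m = 1" using zv_root[of j m] by auto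
    then show "poly pm x = 0" by (simp add: ppm geometric_sum)
  qed
  have "pm = Polynomial.smult (lead_coeff pm) (\<Prod>x\<in>#proots pm. [:-x, 1:])"
    by (rule complex_poly_decompose_multiset[symmetric])
  then have "pm = (\<Prod>x\<in>A. [:-x, 1:])" by (simp add: lpm prA prod_unfold_prod_mset)
  then have "poly pm 1 = (\<Prod>x\<in>A. (1 - x))" by (simp add: poly_prod)
  also have "\<dots> = (\<Prod>j\<in>{1..<m}. (1 - zv m j))"
    unfolding A_def using inj by (simp add: prod.reindex)
  finally show ?thesis by (simp add: ppm)
qed

lemma prod_group:
  assumes m: "m \<ge> 1"
  shows "(\<Prod>j\<in>{1..<m}. (1 - zv m j)) = (\<Prod>d\<in>{d. d dvd m \<and> d > 1}. \<Prod>k\<in>U d. (1 - zv d k))"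
proof -
  define D where "D = {d. d dvd m \<and> d > 1}"
  have "D \<subseteq> {..m}" using m by (auto simp: D_def dest: dvd_imp_le)
  then have finD: "finite D" by (rule finite_subset) simp
  have "(\<Prod>d\<in>D. \<Prod>k\<in>U d. (1 - zv d k)) = (\<Prod>(d, k)\<in>Sigma D U. (1 - zv d k))"
    using finD by (subst prod.Sigma) auto
  also have "\<dots> = (\<Prod>j\<in>{1..<m}. (1 - zv m j))"
  proof (rule prod.reindex_bij_witness[where j = "\<lambda>(d, k). k * (m div d)"
        and i = "\<lambda>j. (m div gcd j m, j div gcd j m)"])
    fix a assume a: "a \<in> Sigma D U"
    obtain d k where dk: "a = (d, k)" by (cases a)
    have d: "d dvd m" "d > 1" "k \<ge> 1" "k < d" "coprime k d"
      using a dk by (auto simp: D_def U_def)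
    define e where "e = m div d"
    have me: "m = d * e" using d(1) by (simp add: e_def)
    have e0: "e > 0" using me m by (cases e) auto
    have g1: "gcd k d = 1" using d(5) by (rule coprime_imp_gcd_eq_1)
    have "gcd (e * k) (e * d) = e" using gcd_mult_distrib_nat[of e k d] g1 by simp
    then have g: "gcd (k * e) m = e" by (metis me mult.commute)
    show "(\<lambda>j. (m div gcd j m, j div gcd j m)) ((\<lambda>(d, k). k * (m div d)) a) = a"
      using g e0 me d by (simp add: dk e_def[symmetric])
    show "(\<lambda>(d, k). k * (m div d)) a \<in> {1..<m}"
      using d e0 me by (simp add: dk e_def[symmetric])
    have "real (k * e) / real m = real k / real d"
      using me e0 d by (simp add: field_simps)
    then show "1 - zv m ((\<lambda>(d, k). k * (m div d)) a) = (case a of (d, k) \<Rightarrow> 1 - zv d k)"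
      by (simp add: dk e_def[symmetric] zv_def times_divide_eq_right[symmetric] del: times_divide_eq_right)
  next
    fix b assume b: "b \<in> {1..<m}"
    define g where "g = gcd b m"
    have g0: "g > 0" using m by (simp add: g_def)
    have gb: "g dvd b" "g dvd m" by (auto simp: g_def)
    have gle: "g \<le> b" using gb b by (auto intro: dvd_imp_le)
    have mg: "m div g * g = m" using gb by simp
    have bg: "b div g * g = b" using gb by simp
    have q0: "m div g > 0" using mg m by (cases "m div g") auto
    have "(m div g * g) div (m div g) = g" using q0 by simp
    then have "m div (m div g) = g" using mg by simp
    then show "(\<lambda>(d, k). k * (m div d)) ((\<lambda>j. (m div gcd j m, j div gcd j m)) b) = b"
      using bg by (simp add: g_def[symmetric])
    have "m div g dvd m" using mg by (metis dvd_triv_left)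
    moreover have "m div g > 1"
    proof -
      have "g < m" using gle b by simp
      show ?thesis
      proof (rule ccontr)
        assume "\<not> 1 < m div g"
        then have "m div g * g \<le> 1 * g" by (intro mult_le_mono1) simp
        then show False using mg \<open>g < m\<close> by simp
      qed
    qed
    moreover have "b div g \<ge> 1" using bg b by (cases "b div g") auto
    moreover have "b div g < m div g"
    proof -
      have "b div g * g < m div g * g" using bg mg b by simp
      then show ?thesis by (simp only: mult_less_cancel2)
    qed
    moreover have "coprime (b div g) (m div g)"
      unfolding g_def using g0 by (intro div_gcd_coprime) (auto simp: g_def)
    ultimately show "(\<lambda>j. (m div gcd j m, j div gcd j m)) b \<in> Sigma D U"
      by (simp add: D_def U_def g_def[symmetric])
  qed
  finally show ?thesis by (simp add: D_def)
qed

definition lam :: "nat \<Rightarrow> nat" where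
  "lam d = (if primepow d then aprimedivisor d else 1)"

lemma lam_pos: "lam d > 0"
  by (auto simp: lam_def intro!: aprimedivisor_pos_nat primepow_gt_Suc_0)

lemma prod_lam:
  assumes "m > 0"
  shows "(\<Prod>d\<in>{d. d dvd m}. lam d) = m"
proof -
  have fin: "finite {d. d dvd m}" using assms by simp
  have ml: "mangoldt d = ln (real (lam d))" for d
    by (simp add: mangoldt_def lam_def)
  have "ln (real (\<Prod>d\<in>{d. d dvd m}. lam d)) = (\<Sum>d\<in>{d. d dvd m}. ln (real (lam d)))"
    using fin lam_pos by (simp add: ln_prod)
  also have "\<dots> = (\<Sum>d | d dvd m. mangoldt d)" by (simp add: ml)
  also have "\<dots> = ln (real m)" using mangoldt_sum[of m, where 'a=real] assms by simp
  finally have "real (\<Prod>d\<in>{d. d dvd m}. lam d) = real m"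
    using assms lam_pos fin by (subst (asm) ln_inj_iff) (auto intro!: prod_pos)
  then show ?thesis by (simp only: of_nat_eq_iff)
qed

lemma prod_lam_gt1:
  assumes "m > 0"
  shows "(\<Prod>d\<in>{d. d dvd m \<and> d > 1}. (of_nat (lam d) :: complex)) = of_nat m"
proof -
  have fin: "finite {d. d dvd m}" using assms by simp
  have "{d. d dvd m} = insert 1 {d. d dvd m \<and> d > 1}"
    using assms by (auto simp: not_less)
  moreover have "1 \<notin> {d. d dvd m \<and> d > 1}" by simp
  moreover have "finite {d. d dvd m \<and> d > 1}" using fin by (auto intro: finite_subset)
  moreover have "lam 1 = 1" by (simp add: lam_def)
  ultimately have "(\<Prod>d\<in>{d. d dvd m}. lam d) = (\<Prod>d\<in>{d. d dvd m \<and> d > 1}. lam d)"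
    by simp
  then have "(\<Prod>d\<in>{d. d dvd m \<and> d > 1}. lam d) = m" using prod_lam[OF assms] by simp
  then show ?thesis by (metis of_nat_prod)
qed

lemma Q_lam:
  assumes "m \<ge> 2"
  shows "(\<Prod>k\<in>U m. (1 - zv m k)) = of_nat (lam m)"
  using assms
proof (induction m rule: less_induct)
  case (less m)
  define Q where "Q = (\<lambda>d. \<Prod>k\<in>U d. (1 - zv d k))"
  define D where "D = {d. d dvd m \<and> d > 1}"
  define D' where "D' = D - {m}"
  have "D \<subseteq> {..m}" using less.prems by (auto simp: D_def dest: dvd_imp_le)
  then have finD: "finite D" by (rule finite_subset) simp
  have mD: "m \<in> D" using less.prems by (simp add: D_def)
  have DD: "D = insert m D'" "m \<notin> D'" "finite D'" using mD finD by (auto simp: D'_def)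
  have IH: "Q d = of_nat (lam d)" if "d \<in> D'" for d
  proof -
    have "d dvd m" "d > 1" "d \<noteq> m" using that by (auto simp: D'_def D_def)
    then have "d < m" "d \<ge> 2" using less.prems by (auto dest: dvd_imp_le)
    then show ?thesis using less.IH unfolding Q_def by blast
  qed
  have "(\<Prod>d\<in>D. Q d) = of_nat m"
    using prod_one_minus_roots[of m] prod_group[of m] less.prems by (simp add: Q_def D_def)
  also have "\<dots> = (\<Prod>d\<in>D. (of_nat (lam d) :: complex))"
    using prod_lam_gt1[of m] less.prems by (simp add: D_def)
  finally have "Q m * (\<Prod>d\<in>D'. Q d) = of_nat (lam m) * (\<Prod>d\<in>D'. (of_nat (lam d) :: complex))"
    using DD by simp
  moreover have "(\<Prod>d\<in>D'. Q d) = (\<Prod>d\<in>D'. (of_nat (lam d) :: complex))"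
    using IH by (intro prod.cong) auto
  moreover have "(\<Prod>d\<in>D'. (of_nat (lam d) :: complex)) \<noteq> 0"
    using lam_pos DD by (simp add: prod_zero_iff)
  ultimately have "Q m = of_nat (lam m)" by simp
  then show ?case by (simp add: Q_def)
qed

lemma sum_singletons: "finite A \<Longrightarrow> (\<Sum>x\<in>A. {#f x#}) = image_mset f (mset_set A)"
  by (induction A rule: finite_induct) auto

lemma main_ratio:
  assumes n: "n \<ge> 2"
  shows "disc (map_poly of_int (fibotomic n)) / disc (cyclotomic n) = 2 ^ totient n / of_nat (lam n)"
proof -
  define A where "A = U n"
  have cardA: "card A = totient n"
  proof -
    have "totatives n = {k\<in>{1..n}. coprime k n}"
      by (auto simp: totatives_def)
    then show ?thesis using U_eq[OF n] by (simp add: totient_def A_def)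
  qed
  have injy: "inj_on (yv n) A"
  proof (rule inj_onI)
    fix j l assume "j \<in> A" "l \<in> A" "yv n j = yv n l"
    then have "j * n = l * n" using yv_eq[of j n l n] n by (auto simp: A_def U_def)
    then show "j = l" using n by simp
  qed
  have injz: "inj_on (zv n) A"
    by (rule inj_onI) (use zv_inj n in \<open>auto simp: A_def U_def\<close>)
  have fA: "finite A" by (simp add: A_def)
  define Dy where "Dy = (\<Prod>k\<in>A. \<Prod>l\<in>A-{k}. (yv n k - yv n l))"
  define Dz where "Dz = (\<Prod>k\<in>A. \<Prod>l\<in>A-{k}. (zv n k - zv n l))"
  have "map_poly of_int (fibotomic n) = ci (\<Prod>(Sq n))" using fibotomic_eq[OF n] by simp
  moreover have "proots (ci (\<Prod>(Sq n))) = mset_set (yv n ` A)"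
    using proots_Psi[OF n] by (simp add: Yset_def A_def U_def)
  ultimately have d1: "disc (map_poly of_int (fibotomic n)) = sg (totient n) * Dy"
    using disc_eq[of _ "yv n ` A"] DS_image[OF injy] injy cardA fA
    by (simp add: card_image Dy_def)
  have "cyclotomic n = (\<Prod>k\<in>A. [:- zv n k, 1:])"
    unfolding cyclotomic_def U_eq[OF n] A_def zv_def by simp
  then have "proots (cyclotomic n) = (\<Sum>k\<in>A. proots [:- zv n k, 1:])"
    by (simp add: proots_prod)
  also have "\<dots> = (\<Sum>k\<in>A. {#zv n k#})"
    by (intro sum.cong refl) (metis proots_linear_factor minus_minus)
  also have "\<dots> = mset_set (zv n ` A)"
    by (simp add: sum_singletons A_def image_mset_mset_set[OF injz[unfolded A_def]])
  finally have d2: "disc (cyclotomic n) = sg (totient n) * Dz"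
    using disc_eq[of _ "zv n ` A"] DS_image[OF injz] injz cardA fA
    by (simp add: card_image Dz_def)
  have Dznz: "Dz \<noteq> 0"
    unfolding Dz_def using injz by (auto simp: A_def inj_on_def)
  have sgnz: "sg (totient n) \<noteq> 0" using sg_sq[of "totient n"] by auto
  have key: "Dy * of_nat (lam n) = 2 ^ totient n * Dz"
    using main_product[OF n] Q_lam[OF n] cardA by (simp add: Dy_def Dz_def A_def)
  have "disc (map_poly of_int (fibotomic n)) / disc (cyclotomic n) = Dy / Dz"
    using d1 d2 sgnz by simp
  also have "\<dots> = 2 ^ totient n / of_nat (lam n)"
    using key Dznz lam_pos[of n] by (simp add: field_simps)
  finally show ?thesis .
qed

theorem mainTheorem7:
  fixes n :: nat
  assumes "n \<ge> 2"
  shows "(\<forall>p \<alpha>. prime p \<and> \<alpha> > 0 \<and> n = p ^ \<alpha> \<longrightarrow>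
            disc (map_poly of_int (fibotomic n)) / disc (cyclotomic n) =
              2 ^ totient n / of_nat p)
       \<and> ((\<nexists>p \<alpha>. prime p \<and> \<alpha> > 0 \<and> n = p ^ \<alpha>) \<longrightarrow>
            disc (map_poly of_int (fibotomic n)) / disc (cyclotomic n) = 2 ^ totient n)"
proof (intro conjI allI impI)
  fix p \<alpha> :: nat
  assume h: "prime p \<and> \<alpha> > 0 \<and> n = p ^ \<alpha>"
  then have "lam n = p" by (auto simp: lam_def aprimedivisor_prime_power)
  then show "disc (map_poly of_int (fibotomic n)) / disc (cyclotomic n) = 2 ^ totient n / of_nat p"
    using main_ratio[OF assms] by simp
next
  assume h: "\<nexists>p \<alpha>. prime p \<and> \<alpha> > 0 \<and> n = p ^ \<alpha>"
  then have "\<not> primepow n" by (auto simp: primepow_def)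
  then have "lam n = 1" by (simp add: lam_def)
  then show "disc (map_poly of_int (fibotomic n)) / disc (cyclotomic n) = 2 ^ totient n"
    using main_ratio[OF assms] by simp
qed

end
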